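(* Let $k\in\mathbb N$, let $I$ be an interval of length $|I|=b$, and let $g\in C^k(I,\mathbb R)$ satisfy $\|g^{(m)}\|_\infty\le c_m$ for $m=0,\dots,k$, where $c_0<1$. Let $\epsilon>0$ and assume $k\ge1/\epsilon$ and $b\le c_0^{\epsilon}$. Then there are constants $\tilde C_m(\epsilon)\ge0$, $m=0,\dots,k$, depending only on $\epsilon$ and on $c_1,\dots,c_k$ (and increasing in the $c_j$), but not on $b$ or $c_0$, such that $$\|g^{(m)}\|_\infty\le c_0\,\tilde C_m(\epsilon)\,b^{-m},\qquad m=0,\dots,k.$$
   Context: $\|\cdot\|_\infty$ is the supremum norm over $I$. *)

theory Defs
  imports "HOL-Analysis.Analysis"
begin

text \<open>D is a C^k function on the interval I together with its derivatives:
  D 0 = g, D m = g^(m) (one-sided at endpoints of I), all continuous on I.\<close>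
definition Ck_on :: "nat \<Rightarrow> real set \<Rightarrow> (nat \<Rightarrow> real \<Rightarrow> real) \<Rightarrow> bool" where
  "Ck_on k I D \<longleftrightarrow>
     (\<forall>m<k. \<forall>x\<in>I. (D m has_real_derivative D (Suc m) x) (at x within I)) \<and>
     (\<forall>m\<le>k. continuous_on I (D m))"

end

theory Submission
  imports Defs
begin

lemma Ck_mvt:
  assumes "Ck_on k I D" "m < k" "{a..b} \<subseteq> I" "a \<le> b"
  shows "\<exists>y\<in>{a..b}. D m b - D m a = D (Suc m) y * (b - a)"
proof -
  have "\<And>x. a \<le> x \<Longrightarrow> x \<le> b \<Longrightarrow> (D m has_derivative (\<lambda>h. D (Suc m) x * h)) (at x within {a..b})"
  proof -
    fix x assume "a \<le> x" "x \<le> b"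
    then have "x \<in> I" using assms(3) by auto
    then have "(D m has_real_derivative D (Suc m) x) (at x within I)"
      using assms(1,2) unfolding Ck_on_def by blast
    then have "(D m has_real_derivative D (Suc m) x) (at x within {a..b})"
      using has_field_derivative_subset assms(3) by blast
    then show "(D m has_derivative (\<lambda>h. D (Suc m) x * h)) (at x within {a..b})"
      by (simp add: has_field_derivative_def)
  qed
  from mvt_very_simple[OF assms(4) this] show ?thesis by auto
qed

lemma Ck_bound:
  assumes "Ck_on k I D" "m < k" "{a..b} \<subseteq> I" "a \<le> b"
    and "\<forall>y\<in>{a..b}. \<bar>D (Suc m) y\<bar> \<le> M"
  shows "\<bar>D m b - D m a\<bar> \<le> M * (b - a)"
proof -
  obtain y where y: "y \<in> {a..b}" "D m b - D m a = D (Suc m) y * (b - a)"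
    using Ck_mvt[OF assms(1-4)] by blast
  have "\<bar>D (Suc m) y * (b - a)\<bar> = \<bar>D (Suc m) y\<bar> * (b - a)" using assms(4) by (simp add: abs_mult)
  also have "\<dots> \<le> M * (b - a)" using assms(5) y(1) assms(4) by (simp add: mult_right_mono)
  finally show ?thesis using y(2) by simp
qed

primrec G :: "nat \<Rightarrow> real" where
  "G 0 = 1"
| "G (Suc j) = 2 * 3 ^ Suc j * G j"

lemma G_nonneg: "0 \<le> G j" by (induction j) auto

lemma exists_small:
  assumes "Ck_on k I D" "j \<le> k"
  shows "u < v \<Longrightarrow> {u..v} \<subseteq> I \<Longrightarrow> \<forall>x\<in>{u..v}. \<bar>D 0 x\<bar> \<le> A \<Longrightarrow>
    \<exists>\<xi>\<in>{u..v}. \<bar>D j \<xi>\<bar> \<le> G j * A / (v - u) ^ j"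
  using assms(2)
proof (induction j arbitrary: u v)
  case 0
  then show ?case by auto
next
  case (Suc j)
  define L where "L = v - u"
  have L: "0 < L" using Suc.prems L_def by auto
  have A: "0 \<le> A" using Suc.prems(3) \<open>u < v\<close> by (meson abs_ge_zero atLeastAtMost_iff less_imp_le order_trans order_refl)
  have s1: "{u..u + L/3} \<subseteq> {u..v}" "{v - L/3..v} \<subseteq> {u..v}" using L L_def by (auto simp: field_simps)
  obtain x1 where x1: "x1 \<in> {u..u + L/3}" "\<bar>D j x1\<bar> \<le> G j * A / (L/3) ^ j"
  proof -
    have "\<exists>\<xi>\<in>{u..u + L/3}. \<bar>D j \<xi>\<bar> \<le> G j * A / (u + L/3 - u) ^ j"
      apply (rule Suc.IH) using Suc.prems L s1 by auto
    then show ?thesis using that by auto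
  qed
  obtain x2 where x2: "x2 \<in> {v - L/3..v}" "\<bar>D j x2\<bar> \<le> G j * A / (L/3) ^ j"
  proof -
    have "\<exists>\<xi>\<in>{v - L/3..v}. \<bar>D j \<xi>\<bar> \<le> G j * A / (v - (v - L/3)) ^ j"
      apply (rule Suc.IH) using Suc.prems L s1 by auto
    then show ?thesis using that by auto
  qed
  have "x1 \<le> u + L/3" "v - L/3 \<le> x2" using x1(1) x2(1) by auto
  then have sep: "x2 - x1 \<ge> L/3" using L_def by linarith
  have sub: "{x1..x2} \<subseteq> I" using x1 x2 Suc.prems(2) by auto
  obtain y where y: "y \<in> {x1..x2}" "D j x2 - D j x1 = D (Suc j) y * (x2 - x1)"
  proof -
    have "x1 \<le> x2" using sep L by linarith
    moreover have "j < k" using Suc.prems(4) by simp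
    ultimately show ?thesis using Ck_mvt[OF assms(1) _ sub] that by blast
  qed
  have yI: "y \<in> {u..v}" using y x1 x2 by auto
  define B where "B = G j * A / (L/3) ^ j"
  have B: "0 \<le> B" unfolding B_def using G_nonneg A L by auto
  have "\<bar>D (Suc j) y\<bar> * (x2 - x1) \<le> 2 * B"
  proof -
    have "\<bar>D (Suc j) y\<bar> * (x2 - x1) = \<bar>D j x2 - D j x1\<bar>" using y(2) sep L by (simp add: abs_mult)
    also have "\<dots> \<le> \<bar>D j x2\<bar> + \<bar>D j x1\<bar>" by (rule abs_diff_le_iff[THEN iffD2]) auto
    also have "\<dots> \<le> 2 * B" using x1(2) x2(2) unfolding B_def by linarith
    finally show ?thesis .
  qed
  then have "\<bar>D (Suc j) y\<bar> * (L/3) \<le> 2 * B"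
    using sep by (smt (verit) abs_ge_zero mult_left_mono)
  then have "\<bar>D (Suc j) y\<bar> \<le> 2 * B / (L/3)" using L by (simp add: field_simps)
  also have "2 * B / (L/3) = G (Suc j) * A / L ^ Suc j"
    unfolding B_def using L by (simp add: field_simps power_divide)
  finally show ?case using yI L_def by blast
qed

definition Ct :: "nat \<Rightarrow> real \<Rightarrow> (nat \<Rightarrow> real) \<Rightarrow> nat \<Rightarrow> real" where
  "Ct k \<epsilon> c m = (\<Sum>i\<in>{m..<k}. 2 ^ i * G i) + (if k = 0 then 0 else max 0 (c k))"

lemma Ct_nonneg: "0 \<le> Ct k \<epsilon> c m"
  unfolding Ct_def using G_nonneg by (auto intro!: sum_nonneg add_nonneg_nonneg)

lemma Ct_rec: "m < k \<Longrightarrow> Ct k \<epsilon> c m = 2 ^ m * G m + Ct k \<epsilon> c (Suc m)"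
  unfolding Ct_def by (simp add: sum.atLeast_Suc_lessThan)

lemma main_bound:
  assumes I: "is_interval I" "bounded I" "I \<noteq> {}" and b: "b = Sup I - Inf I" "0 < b"
    and Ck: "Ck_on k I D" and bnd: "\<forall>m\<le>k. \<forall>x\<in>I. \<bar>D m x\<bar> \<le> c m" and c0: "c 0 < 1"
    and e: "0 < \<epsilon>" "real k \<ge> 1 / \<epsilon>" "b \<le> c 0 powr \<epsilon>"
  shows "\<forall>m\<le>k. \<forall>x\<in>I. \<bar>D m x\<bar> \<le> c 0 * Ct k \<epsilon> c m / b ^ m"
proof -
  obtain x0 where x0: "x0 \<in> I" using I(3) by blast
  have c0nn: "0 \<le> c 0" using bnd x0 by (meson abs_ge_zero order_trans le0)
  have c0pos: "0 < c 0"
  proof (rule ccontr)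
    assume "\<not> 0 < c 0"
    then have "c 0 = 0" using c0nn by simp
    then show False using e(3) b(2) by simp
  qed
  have k1: "k \<ge> 1" using e(1,2) by (cases k) auto
  have ek: "1 \<le> \<epsilon> * real k" using e(1,2) by (simp add: field_simps)
  have bk: "b ^ k \<le> c 0"
  proof -
    have "b ^ k \<le> (c 0 powr \<epsilon>) ^ k" using e(3) b(2) by (simp add: power_mono)
    also have "\<dots> = c 0 powr (real k * \<epsilon>)" using c0pos by (simp add: powr_power)
    also have "\<dots> \<le> c 0 powr 1" using ek c0 c0nn by (intro powr_mono') (auto simp: mult.commute)
    finally show ?thesis using c0pos by simp
  qed
  have bdd: "bdd_below I" "bdd_above I" using I(2) by (auto simp: bounded_imp_bdd_below bounded_imp_bdd_above)
  have P: "\<forall>x\<in>I. \<bar>D m x\<bar> \<le> c 0 * Ct k \<epsilon> c m / b ^ m" if "m \<le> k" for m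
    using that
  proof (induction m rule: inc_induct)
    case base
    show ?case
    proof
      fix x assume x: "x \<in> I"
      have ck: "\<bar>D k x\<bar> \<le> c k" using bnd x by auto
      have "c k \<le> max 0 (c k)" by simp
      have "max 0 (c k) * b ^ k \<le> max 0 (c k) * c 0" using bk by (simp add: mult_left_mono)
      then have "max 0 (c k) \<le> c 0 * max 0 (c k) / b ^ k" using b(2)
        by (subst pos_le_divide_eq) (auto simp: mult.commute)
      also have "\<dots> = c 0 * Ct k \<epsilon> c k / b ^ k" using k1 by (simp add: Ct_def)
      finally show "\<bar>D k x\<bar> \<le> c 0 * Ct k \<epsilon> c k / b ^ k" using ck by simp
    qed
  next
    case (step j)
    show ?case
    proof
      fix x assume x: "x \<in> I"
      obtain u0 where u0: "u0 \<in> I" "u0 < Inf I + b/4"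
        using cInf_less_iff[OF I(3) bdd(1), of "Inf I + b/4"] b(2) by auto
      obtain v0 where v0: "v0 \<in> I" "Sup I - b/4 < v0"
        using less_cSup_iff[OF I(3) bdd(2), of "Sup I - b/4"] b(2) by auto
      define u where "u = min u0 x"
      define v where "v = max v0 x"
      have uI: "u \<in> I" "v \<in> I" using u0 v0 x u_def v_def by (auto simp: min_def max_def)
      have "Inf I \<le> u" "v \<le> Sup I" using uI bdd by (auto intro: cInf_lower cSup_upper)
      note a0 = this
      have a1: "u \<le> u0" "v0 \<le> v" "u \<le> x" "x \<le> v" using u_def v_def by auto
      have len: "b/2 \<le> v - u" "v - u \<le> b" "u \<le> x" "x \<le> v"
      proof -
        note a = a0 a1
        have h1: "u0 < Inf I + b/4" "Sup I - b/4 < v0" by (fact u0(2), fact v0(2))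
        have "v - u \<ge> v0 - u0" using a(3,4) by simp
        moreover have "v0 - u0 > b/2" using h1 b(1) by linarith
        ultimately show "b/2 \<le> v - u" by linarith
        show "v - u \<le> b" using a(1,2) b(1) by simp
        show "u \<le> x" "x \<le> v" by (fact a1(3), fact a1(4))
      qed
      have uv: "u < v" using len b(2) by linarith
      have sub: "{u..v} \<subseteq> I"
      proof
        fix y assume "y \<in> {u..v}"
        then have "u \<le> y" "y \<le> v" by auto
        then show "y \<in> I" using I(1)[unfolded is_interval_1] uI by blast
      qed
      have A: "\<forall>y\<in>{u..v}. \<bar>D 0 y\<bar> \<le> c 0"
      proof
        fix y assume "y \<in> {u..v}"
        then have "y \<in> I" using sub by blast
        then show "\<bar>D 0 y\<bar> \<le> c 0" using bnd by simp
      qed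
      obtain xi where xi: "xi \<in> {u..v}" "\<bar>D j xi\<bar> \<le> G j * c 0 / (v - u) ^ j"
      proof -
        have "j \<le> k" using step(2) by simp
        from exists_small[OF Ck this uv sub A] show ?thesis using that by blast
      qed
      have "(b/2) ^ j \<le> (v - u) ^ j" using len b(2) by (intro power_mono) auto
      then have "G j * c 0 / (v - u) ^ j \<le> G j * c 0 / (b/2) ^ j"
        using b(2) G_nonneg c0nn uv by (intro divide_left_mono) (auto intro!: mult_pos_pos)
      also have "\<dots> = c 0 * (2 ^ j * G j) / b ^ j" by (simp add: power_divide field_simps)
      finally have xi2: "\<bar>D j xi\<bar> \<le> c 0 * (2 ^ j * G j) / b ^ j" using xi(2) by linarith
      define M where "M = c 0 * Ct k \<epsilon> c (Suc j) / b ^ Suc j"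
      have M: "\<forall>y\<in>I. \<bar>D (Suc j) y\<bar> \<le> M" using step(3) M_def by auto
      have M0: "0 \<le> M" unfolding M_def using c0nn Ct_nonneg b(2) by auto
      have diff: "\<bar>D j x - D j xi\<bar> \<le> M * b"
      proof (cases "xi \<le> x")
        case True
        have s2: "{xi..x} \<subseteq> I" using sub xi len by auto
        have "\<forall>y\<in>{xi..x}. \<bar>D (Suc j) y\<bar> \<le> M" using M s2 by blast
        then have "\<bar>D j x - D j xi\<bar> \<le> M * (x - xi)"
          using Ck_bound[OF Ck step(2) s2 True] by blast
        also have "\<dots> \<le> M * b" using M0 xi len by (intro mult_left_mono) auto
        finally show ?thesis .
      next
        case False
        have s2: "{x..xi} \<subseteq> I" using sub xi len by auto
        have le: "x \<le> xi" using False by simp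
        have "\<forall>y\<in>{x..xi}. \<bar>D (Suc j) y\<bar> \<le> M" using M s2 by blast
        then have "\<bar>D j xi - D j x\<bar> \<le> M * (xi - x)"
          using Ck_bound[OF Ck step(2) s2 le] by blast
        also have "\<dots> \<le> M * b" using M0 xi len by (intro mult_left_mono) auto
        finally show ?thesis by (simp add: abs_minus_commute)
      qed
      have Mb: "M * b = c 0 * Ct k \<epsilon> c (Suc j) / b ^ j" unfolding M_def using b(2) by (simp add: field_simps)
      have "\<bar>D j x\<bar> \<le> c 0 * (2 ^ j * G j) / b ^ j + c 0 * Ct k \<epsilon> c (Suc j) / b ^ j"
        using diff xi2 Mb by linarith
      also have "\<dots> = c 0 * (2 ^ j * G j + Ct k \<epsilon> c (Suc j)) / b ^ j"
        by (simp only: distrib_left add_divide_distrib)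
      also have "\<dots> = c 0 * Ct k \<epsilon> c j / b ^ j" by (simp only: Ct_rec[OF step(2), symmetric])
      finally show "\<bar>D j x\<bar> \<le> c 0 * Ct k \<epsilon> c j / b ^ j" .
    qed
  qed
  then show ?thesis by blast
qed

theorem lemma2p4:
  shows "\<exists>Ct :: nat \<Rightarrow> real \<Rightarrow> (nat \<Rightarrow> real) \<Rightarrow> nat \<Rightarrow> real.
    (\<forall>k \<epsilon> c c' m. (\<forall>j\<in>{1..k}. c j = c' j) \<longrightarrow> Ct k \<epsilon> c m = Ct k \<epsilon> c' m) \<and>
    (\<forall>k \<epsilon> c c' m. (\<forall>j\<in>{1..k}. c j \<le> c' j) \<longrightarrow> Ct k \<epsilon> c m \<le> Ct k \<epsilon> c' m) \<and>
    (\<forall>k \<epsilon> c m. 0 \<le> Ct k \<epsilon> c m) \<and>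
    (\<forall>(k::nat) (\<epsilon>::real) (c::nat \<Rightarrow> real) (I::real set) (b::real) (D::nat \<Rightarrow> real \<Rightarrow> real).
       is_interval I \<and> bounded I \<and> I \<noteq> {} \<and> b = Sup I - Inf I \<and> 0 < b \<and>
       Ck_on k I D \<and> (\<forall>m\<le>k. \<forall>x\<in>I. \<bar>D m x\<bar> \<le> c m) \<and> c 0 < 1 \<and>
       0 < \<epsilon> \<and> real k \<ge> 1 / \<epsilon> \<and> b \<le> c 0 powr \<epsilon>
       \<longrightarrow> (\<forall>m\<le>k. \<forall>x\<in>I. \<bar>D m x\<bar> \<le> c 0 * Ct k \<epsilon> c m / b ^ m))"
proof (rule exI[of _ Ct], intro conjI)
  show "\<forall>k \<epsilon> c c' m. (\<forall>j\<in>{1..k}. c j = c' j) \<longrightarrow> Ct k \<epsilon> c m = Ct k \<epsilon> c' m"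
  proof (intro allI impI)
    fix k :: nat and \<epsilon> :: real and c c' :: "nat \<Rightarrow> real" and m :: nat assume h: "\<forall>j\<in>{1..k}. c j = (c' j :: real)"
    show "Ct k \<epsilon> c m = Ct k \<epsilon> c' m"
    proof (cases "k = 0")
      case True then show ?thesis unfolding Ct_def by simp
    next
      case False
      then have "c k = c' k" using h by simp
      then show ?thesis unfolding Ct_def by simp
    qed
  qed
  show "\<forall>k \<epsilon> c c' m. (\<forall>j\<in>{1..k}. c j \<le> c' j) \<longrightarrow> Ct k \<epsilon> c m \<le> Ct k \<epsilon> c' m"
  proof (intro allI impI)
    fix k :: nat and \<epsilon> :: real and c c' :: "nat \<Rightarrow> real" and m :: nat assume h: "\<forall>j\<in>{1..k}. c j \<le> (c' j :: real)"
    show "Ct k \<epsilon> c m \<le> Ct k \<epsilon> c' m"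
    proof (cases "k = 0")
      case True then show ?thesis unfolding Ct_def by simp
    next
      case False
      then have "c k \<le> c' k" using h by simp
      then have "max 0 (c k) \<le> max 0 (c' k)" by (rule max.mono[OF order_refl])
      then show ?thesis unfolding Ct_def using False by simp
    qed
  qed
  show "\<forall>k \<epsilon> c m. 0 \<le> Ct k \<epsilon> c m" using Ct_nonneg by blast
  show "\<forall>(k::nat) (\<epsilon>::real) (c::nat \<Rightarrow> real) (I::real set) (b::real) (D::nat \<Rightarrow> real \<Rightarrow> real).
       is_interval I \<and> bounded I \<and> I \<noteq> {} \<and> b = Sup I - Inf I \<and> 0 < b \<and>
       Ck_on k I D \<and> (\<forall>m\<le>k. \<forall>x\<in>I. \<bar>D m x\<bar> \<le> c m) \<and> c 0 < 1 \<and>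
       0 < \<epsilon> \<and> real k \<ge> 1 / \<epsilon> \<and> b \<le> c 0 powr \<epsilon>
       \<longrightarrow> (\<forall>m\<le>k. \<forall>x\<in>I. \<bar>D m x\<bar> \<le> c 0 * Ct k \<epsilon> c m / b ^ m)"
  proof (intro allI, rule impI)
    fix k :: nat and \<epsilon> :: real and c :: "nat \<Rightarrow> real" and I :: "real set" and b :: real and D :: "nat \<Rightarrow> real \<Rightarrow> real"
    assume H: "is_interval I \<and> bounded I \<and> I \<noteq> {} \<and> b = Sup I - Inf I \<and> 0 < b \<and>
       Ck_on k I D \<and> (\<forall>m\<le>k. \<forall>x\<in>I. \<bar>D m x\<bar> \<le> c m) \<and> c 0 < 1 \<and>
       0 < \<epsilon> \<and> real k \<ge> 1 / \<epsilon> \<and> b \<le> c 0 powr \<epsilon>"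
    show "\<forall>m\<le>k. \<forall>x\<in>I. \<bar>D m x\<bar> \<le> c 0 * Ct k \<epsilon> c m / b ^ m"
      using main_bound[of I b k D c \<epsilon>] H by blast
  qed
qed

end
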